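(* Let $\{X_n;n\ge1\}$ be a sequence of independent non-negative random variables with absolutely continuous distribution functions $F_n$ satisfying $\overline F_n(t)>0$ for all $t\ge 0$. Let $\{T_n\}$ be the failure times of the relevation process based on $\{F_n\}$ and $\{T'_n\}$ the failure times of the replacement-by-a-new-unit process based on $\{X_n\}$. If $X_i$ is IFR for all $i\ge1$, then $(T'_1,\ldots,T'_n)\ge_{\mathrm{dyn\text{-}hr}}(T_1,\ldots,T_n)$ for all $n\ge1$. If $X_i$ is DFR for all $i\ge1$, then $(T'_1,\ldots,T'_n)\le_{\mathrm{dyn\text{-}hr}}(T_1,\ldots,T_n)$ for all $n\ge1$.
   Context: Relevation process based on $\{F_n\}$: random times $0<T_1<T_2<\cdots$ with $T_1\sim F_1$ and, for $i\ge2$, conditionally on $T_1=t_1,\ldots,T_{i-1}=t_{i-1}$ ($0<t_1<\cdots<t_{i-1}$), $P(T_i>t\mid\cdot)=\overline F_i(t)/\overline F_i(t_{i-1})$ for $t\ge t_{i-1}$. Replacement-by-a-new-unit process: $T'_n=X_1+\cdots+X_n$. $X$ is IFR [DFR] if its hazard rate $f/\overline F$ is increasing [decreasing]. Multivariate dynamic hazard rate order: for a non-negative continuous random vector $\mathbf X=(X_1,\ldots,X_n)$ and $t\ge0$, a history is $h_t=\{\mathbf X_I=\mathbf x_I,\ \mathbf X_{\overline I}>t\mathbf e\}$ with $I\subseteq\{1,\ldots,n\}$, $\overline I$ its complement, $0<x_i<t$ for $i\in I$, $\mathbf e$ a vector of ones. For $j\in\overline I$, $\eta_j(t\mid h_t)=\lim_{\Delta\to0^+}\Delta^{-1}P(t<X_j\le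 t+\Delta\mid h_t)$. Given $\mathbf X,\mathbf Y$ with such functions $\eta$ and $\lambda$, $\mathbf X\le_{\mathrm{dyn\text{-}hr}}\mathbf Y$ means $\eta_k(t\mid h_t)\ge\lambda_k(t\mid h'_t)$ for all $t\ge0$, all histories $h_t=\{\mathbf X_{I\cup J}=\mathbf x_{I\cup J},\mathbf X_{\overline{I\cup J}}>t\mathbf e\}$ and $h'_t=\{\mathbf Y_I=\mathbf y_I,\mathbf Y_{\overline I}>t\mathbf e\}$ with $I\cap J=\emptyset$, $\mathbf 0\le\mathbf x_I\le\mathbf y_I\le t\mathbf e$, $\mathbf 0\le \mathbf x_J\le t\mathbf e$, and all $k\in\overline{I\cup J}$. *)

theory Defs
  imports "HOL-Analysis.Analysis"
begin

text \<open>Lifetime distributions. f n is the density of X_n (n >= 1); the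
distribution function F_n is absolutely continuous with density f n.\<close>

definition survival :: "(real \<Rightarrow> real) \<Rightarrow> real \<Rightarrow> real" where
  "survival g t = (LINT x:{t<..}|lborel. g x)"

definition is_lifetime_density :: "(real \<Rightarrow> real) \<Rightarrow> bool" where
  "is_lifetime_density g \<longleftrightarrow>
     g \<in> borel_measurable lborel \<and> (\<forall>x. 0 \<le> g x) \<and> (\<forall>x<0. g x = 0) \<and>
     integrable lborel g \<and> (LINT x|lborel. g x) = 1"

definition IFR :: "(real \<Rightarrow> real) \<Rightarrow> bool" where
  "IFR g \<longleftrightarrow> mono_on {0..} (\<lambda>t. g t / survival g t)"

definition DFR :: "(real \<Rightarrow> real) \<Rightarrow> bool" where
  "DFR g \<longleftrightarrow> antimono_on {0..} (\<lambda>t. g t / survival g t)"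

text \<open>Vectors in R^n are functions nat => real, coordinates 1..n.
Joint density of (T_1,...,T_n) for the relevation process: T_1 has density
f_1 and, given T_1..T_{i-1}, T_i has density f_i(t)/Fbar_i(t_{i-1}) on
t > t_{i-1}.\<close>

definition relevation_density ::
  "(nat \<Rightarrow> real \<Rightarrow> real) \<Rightarrow> nat \<Rightarrow> (nat \<Rightarrow> real) \<Rightarrow> real" where
  "relevation_density f n t =
     (if 0 < t 1 \<and> (\<forall>i\<in>{2..n}. t (i - 1) < t i)
      then f 1 (t 1) * (\<Prod>i\<in>{2..n}. f i (t i) / survival (f i) (t (i - 1)))
      else 0)"

text \<open>Joint density of (T'_1,...,T'_n), T'_i = X_1 + ... + X_i with
X_1, X_2, ... independent, X_i having density f_i (with T'_0 = 0).\<close>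

definition replacement_density ::
  "(nat \<Rightarrow> real \<Rightarrow> real) \<Rightarrow> nat \<Rightarrow> (nat \<Rightarrow> real) \<Rightarrow> real" where
  "replacement_density f n t =
     (if 0 < t 1 \<and> (\<forall>i\<in>{2..n}. t (i - 1) < t i)
      then f 1 (t 1) * (\<Prod>i\<in>{2..n}. f i (t i - t (i - 1)))
      else 0)"

text \<open>Conditional quantities for a random vector with joint density g on R^n
(coordinates 1..n), given the history
  h_t = {X_I = x_I, X_j > t for j not in I}.\<close>

definition hist_denom ::
  "((nat \<Rightarrow> real) \<Rightarrow> real) \<Rightarrow> nat \<Rightarrow> real \<Rightarrow> nat set \<Rightarrow> (nat \<Rightarrow> real) \<Rightarrow> real" where
  "hist_denom g n t I x =
     (LINT y|PiM ({1..n} - I) (\<lambda>_. lborel).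
        indicator {y. \<forall>j\<in>{1..n} - I. t < y j} y * g (\<lambda>i. if i \<in> I then x i else y i))"

definition hist_numer ::
  "((nat \<Rightarrow> real) \<Rightarrow> real) \<Rightarrow> nat \<Rightarrow> real \<Rightarrow> nat set \<Rightarrow> (nat \<Rightarrow> real) \<Rightarrow> nat \<Rightarrow> real" where
  "hist_numer g n t I x k =
     (LINT y|PiM ({1..n} - I - {k}) (\<lambda>_. lborel).
        indicator {y. \<forall>j\<in>{1..n} - I - {k}. t < y j} y *
        g (\<lambda>i. if i \<in> I then x i else if i = k then t else y i))"

text \<open>Multivariate conditional hazard rate eta_k(t | h_t)
 = lim (1/Delta) P(t < X_k <= t + Delta | h_t), expressed through the joint
density as (conditional density of X_k at t) / P(X_j > t, j not in I | X_I = x_I).\<close>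

definition mv_hazard ::
  "((nat \<Rightarrow> real) \<Rightarrow> real) \<Rightarrow> nat \<Rightarrow> real \<Rightarrow> nat set \<Rightarrow> (nat \<Rightarrow> real) \<Rightarrow> nat \<Rightarrow> real" where
  "mv_hazard g n t I x k = hist_numer g n t I x k / hist_denom g n t I x"

definition history :: "((nat \<Rightarrow> real) \<Rightarrow> real) \<Rightarrow> nat \<Rightarrow> real \<Rightarrow> nat set \<Rightarrow> (nat \<Rightarrow> real) \<Rightarrow> bool" where
  "history g n t I x \<longleftrightarrow> I \<subseteq> {1..n} \<and> (\<forall>i\<in>I. 0 < x i \<and> x i < t) \<and> 0 < hist_denom g n t I x"

definition dyn_hr_le :: "nat \<Rightarrow> ((nat \<Rightarrow> real) \<Rightarrow> real) \<Rightarrow> ((nat \<Rightarrow> real) \<Rightarrow> real) \<Rightarrow> bool" where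
  "dyn_hr_le n gX gY \<longleftrightarrow>
     (\<forall>t\<ge>0. \<forall>I J x y. I \<inter> J = {} \<and>
        history gX n t (I \<union> J) x \<and> history gY n t I y \<and>
        (\<forall>i\<in>I. 0 \<le> x i \<and> x i \<le> y i \<and> y i \<le> t) \<and> (\<forall>j\<in>J. 0 \<le> x j \<and> x j \<le> t) \<longrightarrow>
        (\<forall>k\<in>{1..n} - (I \<union> J). mv_hazard gX n t (I \<union> J) x k \<ge> mv_hazard gY n t I y k))"

end

theory Submission
  imports Defs
begin

definition mg :: "nat \<Rightarrow> (nat \<Rightarrow> real) \<Rightarrow> (nat \<Rightarrow> real) \<Rightarrow> nat \<Rightarrow> real" where
  "mg a w y i = (if i < a then w i else y i)"

definition mk :: "(nat \<Rightarrow> real \<Rightarrow> real \<Rightarrow> real) \<Rightarrow> nat \<Rightarrow> (nat \<Rightarrow> real) \<Rightarrow> real" where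
  "mk \<phi> n z = (\<Prod>i\<in>{1..n}. \<phi> i (z (i - 1)) (z i))"

definition tl_fun :: "(nat \<Rightarrow> real \<Rightarrow> real \<Rightarrow> real) \<Rightarrow> nat \<Rightarrow> nat \<Rightarrow> real \<Rightarrow> (nat \<Rightarrow> real) \<Rightarrow> (nat \<Rightarrow> real) \<Rightarrow> real" where
  "tl_fun \<phi> a n t w y = (if \<forall>j\<in>{a..n}. t < y j then 1 else 0) *
      (\<Prod>i\<in>{a..n}. \<phi> i (mg a w y (i - 1)) (mg a w y i))"

lemma mg_meas:
  assumes "j < a \<or> j \<in> K"
  shows "(\<lambda>y. mg a w y j) \<in> borel_measurable (PiM K (\<lambda>_. lborel))"
proof (cases "j < a")
  case True then show ?thesis by (simp add: mg_def)
next
  case False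
  then have "j \<in> K" using assms by auto
  then have "(\<lambda>y. y j) \<in> borel_measurable (PiM K (\<lambda>_. lborel))"
    using measurable_component_singleton[of j K "\<lambda>_. lborel"] by (simp add: measurable_lborel2)
  then show ?thesis using False by (simp add: mg_def)
qed

lemma phi_meas:
  assumes "(\<lambda>p. \<phi> (fst p) (snd p)) \<in> borel_measurable borel"
    and "(A :: 'a \<Rightarrow> real) \<in> borel_measurable M" "(B :: 'a \<Rightarrow> real) \<in> borel_measurable M"
  shows "(\<lambda>y. \<phi> (A y) (B y) :: real) \<in> borel_measurable M"
proof -
  have "(\<lambda>y. (A y, B y)) \<in> M \<rightarrow>\<^sub>M borel \<Otimes>\<^sub>M borel" using assms(2,3) by measurable
  then have "(\<lambda>y. (A y, B y)) \<in> M \<rightarrow>\<^sub>M (borel :: (real \<times> real) measure)" by (simp add: borel_prod)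
  from measurable_compose[OF this assms(1)] show ?thesis by simp
qed

lemma tl_meas:
  assumes meas: "\<And>i. (\<lambda>p. \<phi> i (fst p) (snd p)) \<in> borel_measurable borel"
    and a: "a \<ge> 1"
  shows "tl_fun \<phi> a n t w \<in> borel_measurable (PiM {a..n} (\<lambda>_. lborel))"
proof -
  have c: "(\<lambda>y. y j) \<in> borel_measurable (PiM {a..n} (\<lambda>_. lborel))" if "j \<in> {a..n}" for j
    using measurable_component_singleton[of j "{a..n}" "\<lambda>_. lborel"] that by (simp add: measurable_lborel2)
  have p: "(\<lambda>y. \<Prod>i\<in>{a..n}. \<phi> i (mg a w y (i - 1)) (mg a w y i)) \<in> borel_measurable (PiM {a..n} (\<lambda>_. lborel))"
  proof (rule borel_measurable_prod)
    fix i assume i: "i \<in> {a..n}"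
    show "(\<lambda>y. \<phi> i (mg a w y (i - 1)) (mg a w y i)) \<in> borel_measurable (PiM {a..n} (\<lambda>_. lborel))"
      apply (rule phi_meas[OF meas])
      using i a by (auto intro!: mg_meas)
  qed
  have q: "(\<lambda>y. (if \<forall>j\<in>{a..n}. t < y j then 1 else 0) :: real) \<in> borel_measurable (PiM {a..n} (\<lambda>_. lborel))"
  proof -
    have e: "(if \<forall>j\<in>{a..n}. t < y j then 1 else 0) = (\<Prod>j\<in>{a..n}. (if t < y j then 1 else 0) :: real)" for y
      by (induction n) (auto simp: atLeastAtMostSuc_conv)
    show ?thesis unfolding e
      by (intro borel_measurable_prod borel_measurable_if_D) (auto intro!: c)
  qed
  show ?thesis unfolding tl_fun_def using p q by (intro borel_measurable_times)
qed

lemma tl_nonneg: "(\<And>i p q. 0 \<le> \<phi> i p q) \<Longrightarrow> 0 \<le> tl_fun \<phi> a n t w y"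
  unfolding tl_fun_def by (intro mult_nonneg_nonneg prod_nonneg) auto

lemma psf_lborel: "product_sigma_finite (\<lambda>_::nat. (lborel :: real measure))"
  by (simp add: product_sigma_finite_def lborel.sigma_finite_measure_axioms)

lemma tl_integral:
  assumes meas: "\<And>i. (\<lambda>p. \<phi> i (fst p) (snd p)) \<in> borel_measurable borel"
    and nonneg: "\<And>i p q. 0 \<le> \<phi> i p q"
    and zero: "\<And>i p q. q \<le> p \<Longrightarrow> \<phi> i p q = 0"
    and kern: "\<And>i p. i \<ge> 2 \<Longrightarrow> p \<ge> 0 \<Longrightarrow> (\<integral>\<^sup>+q. ennreal (\<phi> i p q) \<partial>lborel) = 1"
    and t: "t \<ge> 0"
  shows "a \<ge> 1 \<Longrightarrow> (\<integral>\<^sup>+y. ennreal (tl_fun \<phi> a n t w y) \<partial>PiM {a..n} (\<lambda>_. lborel)) =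
     (if a \<le> n then \<integral>\<^sup>+u. ennreal ((if t < u then 1 else 0) * \<phi> a (w (a - 1)) u) \<partial>lborel else 1)"
proof (induction "Suc n - a" arbitrary: a w)
  case 0
  then have e: "{a..n} = {}" by auto
  have "tl_fun \<phi> a n t w y = 1" for y unfolding tl_fun_def e by simp
  then show ?case using 0 e by (simp add: space_PiM_empty emeasure_PiM_empty)
next
  case (Suc d)
  interpret product_sigma_finite "\<lambda>_::nat. (lborel :: real measure)" by (rule psf_lborel)
  have an: "a \<le> n" using Suc by auto
  have ins: "{a..n} = insert a {Suc a..n}" using an by auto
  have F: "(\<lambda>y. ennreal (tl_fun \<phi> a n t w y)) \<in> borel_measurable (PiM (insert a {Suc a..n}) (\<lambda>_. lborel))"
    using measurable_compose[OF tl_meas[OF meas Suc(3), where n=n and t=t and w=w] measurable_ennreal] ins by simp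
  have G: "(\<lambda>y. ennreal (tl_fun \<phi> (Suc a) n t w' y)) \<in> borel_measurable (PiM {Suc a..n} (\<lambda>_. lborel))" for w'
    using measurable_compose[OF tl_meas[OF meas, where a="Suc a" and n=n and t=t and w=w'] measurable_ennreal] by simp
  have pw: "tl_fun \<phi> a n t w (x(a := u)) = ((if t < u then 1 else 0) * \<phi> a (w (a - 1)) u) * tl_fun \<phi> (Suc a) n t (w(a := u)) x" for x u
  proof -
    have m: "mg a w (x(a := u)) i = mg (Suc a) (w(a := u)) x i" for i
      by (simp add: mg_def)
    have i1: "(\<forall>j\<in>{a..n}. t < (x(a := u)) j) \<longleftrightarrow> t < u \<and> (\<forall>j\<in>{Suc a..n}. t < x j)"
      using an by (auto simp: ins)
    have "mg (Suc a) (w(a := u)) x (a - 1) = w (a - 1)" "mg (Suc a) (w(a := u)) x a = u"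
      using Suc(3) by (auto simp: mg_def)
    then show ?thesis unfolding tl_fun_def m i1 using an
      by (simp add: prod.atLeast_Suc_atMost)
  qed
  have inner: "(\<integral>\<^sup>+x. ennreal (tl_fun \<phi> a n t w (x(a := u))) \<partial>PiM {Suc a..n} (\<lambda>_. lborel))
     = ennreal ((if t < u then 1 else 0) * \<phi> a (w (a - 1)) u)" for u
  proof -
    have "(\<integral>\<^sup>+x. ennreal (tl_fun \<phi> a n t w (x(a := u))) \<partial>PiM {Suc a..n} (\<lambda>_. lborel))
      = ennreal ((if t < u then 1 else 0) * \<phi> a (w (a - 1)) u) * 
        (\<integral>\<^sup>+x. ennreal (tl_fun \<phi> (Suc a) n t (w(a := u)) x) \<partial>PiM {Suc a..n} (\<lambda>_. lborel))"
      unfolding pw using nonneg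
      by (subst nn_integral_cmult[symmetric]) (auto intro!: nn_integral_cong simp: ennreal_mult G tl_nonneg)
    also have "\<dots> = ennreal ((if t < u then 1 else 0) * \<phi> a (w (a - 1)) u)"
    proof (cases "t < u")
      case False then show ?thesis by simp
    next
      case True
      have IH: "(\<integral>\<^sup>+x. ennreal (tl_fun \<phi> (Suc a) n t (w(a := u)) x) \<partial>PiM {Suc a..n} (\<lambda>_. lborel)) =
        (if Suc a \<le> n then \<integral>\<^sup>+v. ennreal ((if t < v then 1 else 0) * \<phi> (Suc a) u v) \<partial>lborel else 1)"
        using Suc(1)[of "Suc a" "w(a := u)"] Suc(2) by simp
      have "(\<integral>\<^sup>+v. ennreal ((if t < v then 1 else 0) * \<phi> (Suc a) u v) \<partial>lborel) = 
            (\<integral>\<^sup>+v. ennreal (\<phi> (Suc a) u v) \<partial>lborel)"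
        using True zero[of _ u] by (intro nn_integral_cong) auto
      also have "\<dots> = 1" if "Suc a \<le> n" using kern[of "Suc a" u] Suc(3) True t by simp
      finally show ?thesis using IH by simp
    qed
    finally show ?thesis .
  qed
  have "(\<integral>\<^sup>+y. ennreal (tl_fun \<phi> a n t w y) \<partial>PiM {a..n} (\<lambda>_. lborel))
     = (\<integral>\<^sup>+u. (\<integral>\<^sup>+x. ennreal (tl_fun \<phi> a n t w (x(a := u))) \<partial>PiM {Suc a..n} (\<lambda>_. lborel)) \<partial>lborel)"
    unfolding ins by (rule product_nn_integral_insert_rev[OF _ _ F]) auto
  then show ?case using an by (simp add: inner)
qed

lemma mk_split:
  assumes "1 \<le> b" "b \<le> Suc n"
  shows "mk \<phi> n (mg b w y) = (\<Prod>i\<in>{1..<b}. \<phi> i (w (i - 1)) (w i)) *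
            (\<Prod>i\<in>{b..n}. \<phi> i (mg b w y (i - 1)) (mg b w y i))"
proof -
  have e: "{1..n} = {1..<b} \<union> {b..n}" using assms by auto
  have "(\<Prod>i\<in>{1..<b}. \<phi> i (mg b w y (i - 1)) (mg b w y i)) = (\<Prod>i\<in>{1..<b}. \<phi> i (w (i - 1)) (w i))"
    by (intro prod.cong) (auto simp: mg_def)
  then show ?thesis unfolding mk_def e
    by (subst prod.union_disjoint) auto
qed

lemma mk_nz_incr:
  assumes zero: "\<And>i p q. q \<le> p \<Longrightarrow> \<phi> i p q = 0"
    and nz: "mk \<phi> n z \<noteq> 0"
  shows "i < j \<Longrightarrow> j \<le> n \<Longrightarrow> z i < z j"
proof (induction j)
  case 0 then show ?case by simp
next
  case (Suc j)
  have "\<phi> (Suc j) (z j) (z (Suc j)) \<noteq> 0"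
  proof -
    have "Suc j \<in> {1..n}" using Suc(3) by simp
    then show ?thesis using nz unfolding mk_def apply (simp add: prod_zero_iff del: atLeastAtMost_iff)
      apply (drule bspec[where x="Suc j"])
      by simp_all
  qed
  then have "z j < z (Suc j)" using zero[of "z (Suc j)" "z j" "Suc j"] by force
  then show ?case
  proof (cases "i < j")
    case True
    then have "z i < z j" using Suc by simp
    then show ?thesis using \<open>z j < z (Suc j)\<close> by linarith
  next
    case False
    then have "i = j" using Suc(2) by simp
    then show ?thesis using \<open>z j < z (Suc j)\<close> by simp
  qed
qed

lemma hist_struct:
  assumes zero: "\<And>i p q. q \<le> p \<Longrightarrow> \<phi> i p q = 0"
    and g_eq: "\<And>z. g z = mk \<phi> n (z(0 := 0))"
    and hd: "hist_denom g n t I x \<noteq> 0"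
    and I: "I \<subseteq> {1..n}" "\<forall>i\<in>I. x i < t"
  shows "\<exists>m\<le>n. I = {1..m} \<and> (\<Prod>i\<in>{1..m}. \<phi> i ((x(0:=0)) (i - 1)) ((x(0:=0)) i)) \<noteq> 0"
proof -
  obtain y where y: "indicator {y. \<forall>j\<in>{1..n} - I. t < y j} y * g (\<lambda>i. if i \<in> I then x i else y i) \<noteq> (0::real)"
  proof (rule ccontr)
    assume "\<not> thesis"
    with that have "\<forall>y. indicator {y. \<forall>j\<in>{1..n} - I. t < y j} y * g (\<lambda>i. if i \<in> I then x i else y i) = (0::real)"
      by blast
    then have "(\<lambda>y. indicator {y. \<forall>j\<in>{1..n} - I. t < y j} y * g (\<lambda>i. if i \<in> I then x i else y i)) = (\<lambda>_. 0::real)"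
      by (intro ext) blast
    then have "hist_denom g n t I x = 0" unfolding hist_denom_def by (simp only:) simp
    with hd show False by simp
  qed
  define z where "z = (\<lambda>i. if i \<in> I then x i else y i)(0 := 0)"
  have yt: "\<forall>j\<in>{1..n} - I. t < y j" and gnz: "mk \<phi> n z \<noteq> 0"
  proof -
    have "indicator {y. \<forall>j\<in>{1..n} - I. t < y j} y \<noteq> (0::real)" using y by auto
    then show "\<forall>j\<in>{1..n} - I. t < y j" by (simp add: indicator_def split: if_splits)
    show "mk \<phi> n z \<noteq> 0" using y g_eq unfolding z_def by auto
  qed
  have lt: "i < j" if "i \<in> I" "j \<in> {1..n} - I" for i j
  proof (rule ccontr)
    assume "\<not> i < j"
    then have "j < i" using that by (metis DiffD2 linorder_neqE_nat)
    then have "z j < z i" using mk_nz_incr[OF zero gnz, of j i] that I by auto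
    moreover have "z i = x i" "z j = y j" using that I by (auto simp: z_def)
    ultimately show False using that yt I by force
  qed
  define m where "m = (if I = {} then 0 else Max I)"
  have fin: "finite I" using I finite_subset by blast
  have Im: "I = {1..m}"
  proof
    show "I \<subseteq> {1..m}" using I fin by (auto simp: m_def)
    show "{1..m} \<subseteq> I"
    proof
      fix i assume i: "i \<in> {1..m}"
      then have ne: "I \<noteq> {}" by (auto simp: m_def)
      have "Max I \<in> I" using fin ne by simp
      moreover have "Max I \<le> n" using I \<open>Max I \<in> I\<close> by auto
      ultimately show "i \<in> I" using lt[of "Max I" i] i ne by (force simp: m_def)
    qed
  qed
  have mn: "m \<le> n" using I fin by (auto simp: m_def)
  have "z = mg (Suc m) (x(0:=0)) y" using Im by (auto simp: z_def mg_def)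
  then have "mk \<phi> n (mg (Suc m) (x(0:=0)) y) \<noteq> 0" using gnz by simp
  then have "(\<Prod>i\<in>{1..<Suc m}. \<phi> i ((x(0:=0)) (i - 1)) ((x(0:=0)) i)) \<noteq> 0"
    using mk_split[of "Suc m" n \<phi> "x(0:=0)" y] mn by auto
  then have "(\<Prod>i\<in>{1..m}. \<phi> i ((x(0:=0)) (i - 1)) ((x(0:=0)) i)) \<noteq> 0"
    by (metis atLeastLessThanSuc_atLeastAtMost)
  then show ?thesis using Im mn by blast
qed


lemma markov_hazard:
  assumes meas: "\<And>i. (\<lambda>p. \<phi> i (fst p) (snd p)) \<in> borel_measurable borel"
    and nonneg: "\<And>i p q. 0 \<le> \<phi> i p q"
    and zero: "\<And>i p q. q \<le> p \<Longrightarrow> \<phi> i p q = 0"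
    and kern: "\<And>i p. i \<ge> 2 \<Longrightarrow> p \<ge> 0 \<Longrightarrow> (\<integral>\<^sup>+q. ennreal (\<phi> i p q) \<partial>lborel) = 1"
    and g_eq: "\<And>z. g z = mk \<phi> n (z(0 := 0))"
    and t: "t \<ge> 0"
    and hist: "history g n t I x"
  shows "\<exists>m\<le>n. I = {1..m} \<and> (\<forall>k\<in>{1..n} - I. mv_hazard g n t I x k =
     (if k = Suc m then \<phi> k ((x(0:=0)) m) t /
        enn2real (\<integral>\<^sup>+u. ennreal ((if t < u then 1 else 0) * \<phi> k ((x(0:=0)) m) u) \<partial>lborel) else 0))"
proof -
  have I: "I \<subseteq> {1..n}" "\<forall>i\<in>I. 0 < x i \<and> x i < t" and hd: "0 < hist_denom g n t I x"
    using hist unfolding history_def by auto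
  obtain m where mn: "m \<le> n" and Im: "I = {1..m}"
    and Cnz: "(\<Prod>i\<in>{1..m}. \<phi> i ((x(0:=0)) (i - 1)) ((x(0:=0)) i)) \<noteq> 0"
    using hist_struct[OF zero g_eq, of t I x] hd I by force
  define x0 where "x0 = x(0:=0)"
  define C where "C = (\<Prod>i\<in>{1..m}. \<phi> i (x0 (i - 1)) (x0 i))"
  have Cnz': "C \<noteq> 0" using Cnz by (simp add: C_def x0_def)
  have diff: "{1..n} - I = {Suc m..n}" using Im by auto
  have tlint: "LINT y|PiM {a..n} (\<lambda>_. lborel). tl_fun \<phi> a n t w y =
      enn2real (if a \<le> n then \<integral>\<^sup>+u. ennreal ((if t < u then 1 else 0) * \<phi> a (w (a - 1)) u) \<partial>lborel else 1)"
    if "a \<ge> 1" for a w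
    using tl_integral[OF meas nonneg zero kern t that, where n=n and w=w]
    by (subst integral_eq_nn_integral[OF tl_meas[OF meas that]]) (auto simp: tl_nonneg[OF nonneg])
  define Q where "Q = (\<integral>\<^sup>+u. ennreal ((if t < u then 1 else 0) * \<phi> (Suc m) (x0 m) u) \<partial>lborel)"
  have den: "hist_denom g n t I x = C * enn2real (if Suc m \<le> n then Q else 1)"
  proof -
    have pw: "indicator {y. \<forall>j\<in>{Suc m..n}. t < y j} y * g (\<lambda>i. if i \<in> I then x i else y i)
        = C * tl_fun \<phi> (Suc m) n t x0 y" for y
    proof -
      have "(\<lambda>i. if i \<in> I then x i else y i)(0 := 0) = mg (Suc m) x0 y"
        by (auto simp: Im mg_def x0_def)
      then have "g (\<lambda>i. if i \<in> I then x i else y i) = C * (\<Prod>i\<in>{Suc m..n}. \<phi> i (mg (Suc m) x0 y (i - 1)) (mg (Suc m) x0 y i))"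
        using mk_split[of "Suc m" n \<phi> x0 y] mn g_eq
        by (simp add: C_def atLeastLessThanSuc_atLeastAtMost)
      then show ?thesis unfolding tl_fun_def by (simp split: split_indicator)
    qed
    have "hist_denom g n t I x = LINT y|PiM {Suc m..n} (\<lambda>_. lborel). C * tl_fun \<phi> (Suc m) n t x0 y"
      unfolding hist_denom_def diff pw ..
    also have "\<dots> = C * (LINT y|PiM {Suc m..n} (\<lambda>_. lborel). tl_fun \<phi> (Suc m) n t x0 y)"
      by simp
    also have "\<dots> = C * enn2real (if Suc m \<le> n then Q else 1)"
      by (subst tlint) (auto simp: Q_def)
    finally show ?thesis .
  qed
  show ?thesis
  proof (intro exI conjI ballI)
    show "m \<le> n" "I = {1..m}" by fact+
    fix k assume k: "k \<in> {1..n} - I"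
    then have km: "Suc m \<le> k" "k \<le> n" using diff by auto
    show "mv_hazard g n t I x k =
     (if k = Suc m then \<phi> k ((x(0:=0)) m) t /
        enn2real (\<integral>\<^sup>+u. ennreal ((if t < u then 1 else 0) * \<phi> k ((x(0:=0)) m) u) \<partial>lborel) else 0)"
    proof (cases "k = Suc m")
      case True
      have diff2: "{1..n} - I - {k} = {Suc (Suc m)..n}" using Im True by auto
      define w where "w = x0(Suc m := t)"
      have pw: "indicator {y. \<forall>j\<in>{Suc (Suc m)..n}. t < y j} y * g (\<lambda>i. if i \<in> I then x i else if i = k then t else y i)
        = (C * \<phi> (Suc m) (x0 m) t) * tl_fun \<phi> (Suc (Suc m)) n t w y" for y
      proof -
        have "(\<lambda>i. if i \<in> I then x i else if i = k then t else y i)(0 := 0) = mg (Suc (Suc m)) w y"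
          by (auto simp: Im mg_def x0_def w_def True)
        moreover have "(\<Prod>i\<in>{1..<Suc (Suc m)}. \<phi> i (w (i - 1)) (w i)) = C * \<phi> (Suc m) (x0 m) t"
        proof -
          have "(\<Prod>i\<in>{1..<Suc (Suc m)}. \<phi> i (w (i - 1)) (w i)) = (\<Prod>i\<in>{1..m}. \<phi> i (w (i - 1)) (w i)) * \<phi> (Suc m) (w m) (w (Suc m))"
            by (simp add: atLeastLessThanSuc_atLeastAtMost)
          also have "(\<Prod>i\<in>{1..m}. \<phi> i (w (i - 1)) (w i)) = C"
            unfolding C_def by (intro prod.cong) (auto simp: w_def)
          finally show ?thesis by (simp add: w_def)
        qed
        ultimately have "g (\<lambda>i. if i \<in> I then x i else if i = k then t else y i) = 
           (C * \<phi> (Suc m) (x0 m) t) * (\<Prod>i\<in>{Suc (Suc m)..n}. \<phi> i (mg (Suc (Suc m)) w y (i - 1)) (mg (Suc (Suc m)) w y i))"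
          using mk_split[of "Suc (Suc m)" n \<phi> w y] km True g_eq by simp
        then show ?thesis unfolding tl_fun_def by (simp split: split_indicator)
      qed
      have one: "enn2real (if Suc (Suc m) \<le> n then \<integral>\<^sup>+u. ennreal ((if t < u then 1 else 0) * \<phi> (Suc (Suc m)) (w (Suc (Suc m) - 1)) u) \<partial>lborel else 1) = 1"
      proof -
        have "(\<integral>\<^sup>+u. ennreal ((if t < u then 1 else 0) * \<phi> (Suc (Suc m)) t u) \<partial>lborel) = 
              (\<integral>\<^sup>+u. ennreal (\<phi> (Suc (Suc m)) t u) \<partial>lborel)"
          using zero[of _ t] by (intro nn_integral_cong) auto
        also have "\<dots> = 1" using kern[of "Suc (Suc m)" t] t by simp
        finally show ?thesis by (simp add: w_def)
      qed
      have num: "hist_numer g n t I x k = C * \<phi> (Suc m) (x0 m) t"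
      proof -
        have "hist_numer g n t I x k = LINT y|PiM {Suc (Suc m)..n} (\<lambda>_. lborel). (C * \<phi> (Suc m) (x0 m) t) * tl_fun \<phi> (Suc (Suc m)) n t w y"
          unfolding hist_numer_def diff2 pw ..
        also have "\<dots> = (C * \<phi> (Suc m) (x0 m) t) * (LINT y|PiM {Suc (Suc m)..n} (\<lambda>_. lborel). tl_fun \<phi> (Suc (Suc m)) n t w y)"
          by simp
        also have "\<dots> = C * \<phi> (Suc m) (x0 m) t"
          by (subst tlint) (use one in auto)
        finally show ?thesis .
      qed
      have "mv_hazard g n t I x k = (C * \<phi> (Suc m) (x0 m) t) / (C * enn2real Q)"
        unfolding mv_hazard_def num den using km True by simp
      also have "\<dots> = \<phi> (Suc m) (x0 m) t / enn2real Q" using Cnz' by simp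
      finally show ?thesis using True by (simp add: Q_def x0_def)
    next
      case False
      then have km2: "Suc (Suc m) \<le> k" using km by simp
      have "indicator {y. \<forall>j\<in>{1..n} - I - {k}. t < y j} y * g (\<lambda>i. if i \<in> I then x i else if i = k then t else y i) = (0::real)" for y
      proof (cases "\<forall>j\<in>{1..n} - I - {k}. t < y j")
        case True
        have "k - 1 \<in> {1..n} - I - {k}" using km2 km diff by auto
        then have yk: "t < y (k - 1)" using True by blast
        define z where "z = (\<lambda>i. if i \<in> I then x i else if i = k then t else y i)(0 := 0)"
        have "z (k - 1) = y (k - 1)" "z k = t" using km2 Im by (auto simp: z_def)
        then have "\<phi> k (z (k - 1)) (z k) = 0" using zero yk by simp
        then have "mk \<phi> n z = 0" unfolding mk_def using km km2
          by (intro prod_zero) (auto intro!: bexI[of _ k])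
        then show ?thesis using g_eq by (simp add: z_def)
      qed simp
      then have "(\<lambda>y. indicator {y. \<forall>j\<in>{1..n} - I - {k}. t < y j} y * g (\<lambda>i. if i \<in> I then x i else if i = k then t else y i)) = (\<lambda>_. 0::real)"
        by (intro ext)
      then have "hist_numer g n t I x k = 0" unfolding hist_numer_def by (simp only:) simp
      then show ?thesis using False by (simp add: mv_hazard_def)
    qed
  qed
qed


definition hz :: "(nat \<Rightarrow> real \<Rightarrow> real \<Rightarrow> real) \<Rightarrow> nat \<Rightarrow> real \<Rightarrow> real \<Rightarrow> real" where
  "hz \<phi> k a t = \<phi> k a t / enn2real (\<integral>\<^sup>+u. ennreal ((if t < u then 1 else 0) * \<phi> k a u) \<partial>lborel)"

definition good_phi :: "(nat \<Rightarrow> real \<Rightarrow> real \<Rightarrow> real) \<Rightarrow> bool" where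
  "good_phi \<phi> \<longleftrightarrow> (\<forall>i. (\<lambda>p. \<phi> i (fst p) (snd p)) \<in> borel_measurable borel) \<and>
     (\<forall>i p q. 0 \<le> \<phi> i p q) \<and> (\<forall>i p q. q \<le> p \<longrightarrow> \<phi> i p q = 0) \<and>
     (\<forall>i p. i \<ge> 2 \<longrightarrow> p \<ge> 0 \<longrightarrow> (\<integral>\<^sup>+q. ennreal (\<phi> i p q) \<partial>lborel) = 1)"

lemma markov_hazard':
  assumes "good_phi \<phi>" "\<And>z. g z = mk \<phi> n (z(0 := 0))" "t \<ge> 0" "history g n t I x"
  shows "\<exists>m\<le>n. I = {1..m} \<and> (\<forall>k\<in>{1..n} - I. mv_hazard g n t I x k =
     (if k = Suc m then hz \<phi> k ((x(0:=0)) m) t else 0))"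
  using markov_hazard[of \<phi> g n t I x] assms unfolding good_phi_def hz_def by blast

lemma hz_nonneg: "good_phi \<phi> \<Longrightarrow> 0 \<le> hz \<phi> k a t"
  unfolding hz_def good_phi_def by (simp add: divide_nonneg_nonneg)

lemma dyn_main:
  assumes gX: "good_phi \<phi>X" "\<And>z. gX z = mk \<phi>X n (z(0 := 0))"
    and gY: "good_phi \<phi>Y" "\<And>z. gY z = mk \<phi>Y n (z(0 := 0))"
    and one: "\<And>q. \<phi>X 1 0 q = \<phi>Y 1 0 q"
    and key: "\<And>k a b t. k \<ge> 2 \<Longrightarrow> 0 < a \<Longrightarrow> a \<le> b \<Longrightarrow> b < t \<Longrightarrow> hz \<phi>Y k b t \<le> hz \<phi>X k a t"
  shows "dyn_hr_le n gX gY"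
  unfolding dyn_hr_le_def
proof (intro allI impI ballI)
  fix t :: real and I J x y k
  assume t: "t \<ge> 0"
  assume H: "I \<inter> J = {} \<and> history gX n t (I \<union> J) x \<and> history gY n t I y \<and>
        (\<forall>i\<in>I. 0 \<le> x i \<and> x i \<le> y i \<and> y i \<le> t) \<and> (\<forall>j\<in>J. 0 \<le> x j \<and> x j \<le> t)"
  assume k: "k \<in> {1..n} - (I \<union> J)"
  obtain m where m: "m \<le> n" "I \<union> J = {1..m}" and hX: "\<forall>k\<in>{1..n} - (I \<union> J). mv_hazard gX n t (I \<union> J) x k =
     (if k = Suc m then hz \<phi>X k ((x(0:=0)) m) t else 0)"
    using markov_hazard'[OF gX t] H by blast
  obtain p where p: "p \<le> n" "I = {1..p}" and hY: "\<forall>k\<in>{1..n} - I. mv_hazard gY n t I y k =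
     (if k = Suc p then hz \<phi>Y k ((y(0:=0)) p) t else 0)"
    using markov_hazard'[OF gY t] H by blast
  have pm: "p \<le> m"
  proof (rule ccontr)
    assume "\<not> p \<le> m"
    then have "p \<in> I" using p by auto
    then show False using m \<open>\<not> p \<le> m\<close> by auto
  qed
  have kI: "k \<in> {1..n} - I" using k by auto
  have km: "Suc m \<le> k" using k m by auto
  show "mv_hazard gY n t I y k \<le> mv_hazard gX n t (I \<union> J) x k"
  proof (cases "k = Suc m")
    case False
    then have "k \<noteq> Suc p" using km pm by auto
    then show ?thesis using hX hY k kI False by simp
  next
    case True
    show ?thesis
    proof (cases "p = m")
      case False
      then have "k \<noteq> Suc p" using True pm by auto
      then show ?thesis using hX hY k kI True hz_nonneg[OF gX(1)] by simp
    next
      case pmeq: True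
      show ?thesis
      proof (cases "m = 0")
        case True
        then show ?thesis using hX hY k kI \<open>k = Suc m\<close> pmeq one by (simp add: hz_def)
      next
        case False
        have mI: "m \<in> I" using False p pmeq by auto
        have hx: "0 < x m" "x m < t" using H mI unfolding history_def by auto
        have hy: "y m < t" using H mI unfolding history_def by auto
        have xy: "x m \<le> y m" using H mI by auto
        have "hz \<phi>Y k (y m) t \<le> hz \<phi>X k (x m) t"
          using key[of k "x m" "y m" t] hx hy xy False \<open>k = Suc m\<close> by simp
        then show ?thesis using hX hY k kI \<open>k = Suc m\<close> pmeq False by simp
      qed
    qed
  qed
qed


lemma surv_nn:
  assumes d: "is_lifetime_density g"
  shows "(\<integral>\<^sup>+u. ennreal ((if c < u then 1 else 0) * g u) \<partial>lborel) = ennreal (survival g c)"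
proof -
  have gi: "integrable lborel g" and gm: "g \<in> borel_measurable lborel" and g0: "\<And>x. 0 \<le> g x"
    using d unfolding is_lifetime_density_def by auto
  have e: "(\<integral>\<^sup>+u. ennreal ((if c < u then 1 else 0) * g u) \<partial>lborel) = (\<integral>\<^sup>+u. ennreal (indicator {c<..} u *\<^sub>R g u) \<partial>lborel)"
    by (intro nn_integral_cong) (auto simp: indicator_def)
  have "integrable lborel (\<lambda>u. indicator {c<..} u *\<^sub>R g u)"
    by (rule integrable_mult_indicator[OF _ gi]) simp
  then show ?thesis unfolding e survival_def set_lebesgue_integral_def
    by (intro nn_integral_eq_integral) (auto simp: g0 indicator_def)
qed

lemma surv_nonneg:
  assumes d: "is_lifetime_density g"
  shows "0 \<le> survival g c"
  unfolding survival_def set_lebesgue_integral_def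
  using d unfolding is_lifetime_density_def
  by (intro integral_nonneg_AE) (auto simp: indicator_def)

lemma surv_anti:
  assumes d: "is_lifetime_density g" and cd: "c \<le> e"
  shows "survival g e \<le> survival g c"
proof -
  have g0: "\<And>x. 0 \<le> g x" using d unfolding is_lifetime_density_def by auto
  have "ennreal (survival g e) \<le> ennreal (survival g c)"
    unfolding surv_nn[OF d, symmetric]
    using cd g0 by (intro nn_integral_mono) (auto intro!: ennreal_leI)
  then show ?thesis using surv_nonneg[OF d] by (simp add: ennreal_le_iff)
qed

lemma surv_meas:
  assumes d: "is_lifetime_density g"
  shows "survival g \<in> borel_measurable borel"
proof -
  have "mono (\<lambda>c. - survival g c)" using surv_anti[OF d] by (auto simp: mono_def)
  then have "(\<lambda>c. - survival g c) \<in> borel_measurable borel" by (rule borel_measurable_mono)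
  then have "(\<lambda>c. - (- survival g c)) \<in> borel_measurable borel" by measurable
  then show ?thesis by simp
qed

lemma surv0:
  assumes d: "is_lifetime_density g"
  shows "survival g 0 = 1"
proof -
  have gi: "integrable lborel g" and gm: "g \<in> borel_measurable lborel" and g0: "\<And>x. x < 0 \<Longrightarrow> g x = 0"
    and one: "(LINT x|lborel. g x) = 1"
    using d unfolding is_lifetime_density_def by auto
  have "survival g 0 = (LINT x|lborel. g x)"
    unfolding survival_def set_lebesgue_integral_def
  proof (rule integral_cong_AE)
    show "(\<lambda>x. indicator {0<..} x *\<^sub>R g x) \<in> borel_measurable lborel" using gm by measurable
    show "g \<in> borel_measurable lborel" by fact
    show "AE x in lborel. indicator {0<..} x *\<^sub>R g x = g x"
      using AE_lborel_singleton[of 0] by eventually_elim (auto simp: indicator_def g0)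
  qed
  then show ?thesis using one by simp
qed

lemma shift_nn:
  assumes h: "h \<in> borel_measurable borel"
  shows "(\<integral>\<^sup>+q. h (q - p) \<partial>lborel) = (\<integral>\<^sup>+v. h v \<partial>lborel)"
proof -
  have "(\<integral>\<^sup>+v. h v \<partial>lborel) = (\<integral>\<^sup>+v. h v \<partial>distr lborel borel ((+) (- p)))"
    by (simp add: lborel_distr_plus)
  also have "\<dots> = (\<integral>\<^sup>+q. h (- p + q) \<partial>lborel)"
    by (rule nn_integral_distr) (use h in auto)
  finally show ?thesis by simp
qed


definition phiR :: "(nat \<Rightarrow> real \<Rightarrow> real) \<Rightarrow> nat \<Rightarrow> real \<Rightarrow> real \<Rightarrow> real" where
  "phiR f i p q = (if i = 0 then 0 else if p < q then (if i = 1 then f 1 q else f i q / survival (f i) p) else 0)"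

definition phiP :: "(nat \<Rightarrow> real \<Rightarrow> real) \<Rightarrow> nat \<Rightarrow> real \<Rightarrow> real \<Rightarrow> real" where
  "phiP f i p q = (if i = 0 then 0 else if p < q then f i (q - p) else 0)"

context
  fixes f :: "nat \<Rightarrow> real \<Rightarrow> real"
  assumes dens: "\<And>n. n \<ge> 1 \<Longrightarrow> is_lifetime_density (f n)"
    and surv_pos: "\<And>n t. n \<ge> 1 \<Longrightarrow> t \<ge> 0 \<Longrightarrow> survival (f n) t > 0"
begin

lemma fmeas: "i \<ge> 1 \<Longrightarrow> f i \<in> borel_measurable borel"
  using dens[of i] unfolding is_lifetime_density_def by simp

lemma fnn: "i \<ge> 1 \<Longrightarrow> 0 \<le> f i x"
  using dens[of i] unfolding is_lifetime_density_def by simp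

lemma good_R: "good_phi (phiR f)"
  unfolding good_phi_def
proof (intro conjI allI impI)
  fix i
  show "(\<lambda>p. phiR f i (fst p) (snd p)) \<in> borel_measurable borel"
  proof (cases "i = 0")
    case True then show ?thesis by (simp add: phiR_def)
  next
    case False
    then have [measurable]: "f i \<in> borel_measurable borel" "survival (f i) \<in> borel_measurable borel"
      "f 1 \<in> borel_measurable borel"
      using fmeas surv_meas dens by auto
    have "(\<lambda>p::real\<times>real. if fst p < snd p then (if i = 1 then f 1 (snd p) else f i (snd p) / survival (f i) (fst p)) else 0) \<in> borel_measurable (borel \<Otimes>\<^sub>M borel)"
      by (cases "i = 1") simp_all
    then show ?thesis using False unfolding phiR_def by (simp add: borel_prod)
  qed
next
  fix i p q
  show "0 \<le> phiR f i p q" unfolding phiR_def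
    by (auto intro!: divide_nonneg_nonneg fnn surv_nonneg dens)
next
  fix i p q :: real
  show "q \<le> p \<Longrightarrow> phiR f i p q = 0" for i by (simp add: phiR_def)
next
  fix i :: nat and p :: real
  assume i: "2 \<le> i" and p: "0 \<le> p"
  have sp: "survival (f i) p > 0" using surv_pos[of i p] i p by simp
  have [measurable]: "f i \<in> borel_measurable borel" using fmeas i by simp
  have "(\<integral>\<^sup>+q. ennreal (phiR f i p q) \<partial>lborel) = 
        (\<integral>\<^sup>+q. ennreal ((if p < q then 1 else 0) * f i q) * ennreal (1 / survival (f i) p) \<partial>lborel)"
    using i sp by (intro nn_integral_cong) (auto simp: phiR_def ennreal_mult'[symmetric] fnn)
  also have "\<dots> = ennreal (survival (f i) p) * ennreal (1 / survival (f i) p)"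
    using surv_nn[OF dens[of i]] i by (subst nn_integral_multc) auto
  also have "\<dots> = 1" using sp by (simp add: ennreal_mult'[symmetric])
  finally show "(\<integral>\<^sup>+q. ennreal (phiR f i p q) \<partial>lborel) = 1" .
qed

lemma good_P: "good_phi (phiP f)"
  unfolding good_phi_def
proof (intro conjI allI impI)
  fix i
  show "(\<lambda>p. phiP f i (fst p) (snd p)) \<in> borel_measurable borel"
  proof (cases "i = 0")
    case True then show ?thesis by (simp add: phiP_def)
  next
    case False
    then have [measurable]: "f i \<in> borel_measurable borel"
      using fmeas by auto
    have "(\<lambda>p::real\<times>real. if fst p < snd p then f i (snd p - fst p) else 0) \<in> borel_measurable (borel \<Otimes>\<^sub>M borel)"
      by measurable
    then show ?thesis using False unfolding phiP_def by (simp add: borel_prod)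
  qed
next
  fix i p q
  show "0 \<le> phiP f i p q" unfolding phiP_def
    by (auto intro!: fnn)
next
  fix i p q :: real
  show "q \<le> p \<Longrightarrow> phiP f i p q = 0" for i by (simp add: phiP_def)
next
  fix i :: nat and p :: real
  assume i: "2 \<le> i" and p: "0 \<le> p"
  have [measurable]: "f i \<in> borel_measurable borel" using fmeas i by simp
  have "(\<integral>\<^sup>+q. ennreal (phiP f i p q) \<partial>lborel) = 
        (\<integral>\<^sup>+q. (\<lambda>v. ennreal ((if 0 < v then 1 else 0) * f i v)) (q - p) \<partial>lborel)"
    using i by (intro nn_integral_cong) (auto simp: phiP_def)
  also have "\<dots> = (\<integral>\<^sup>+v. ennreal ((if 0 < v then 1 else 0) * f i v) \<partial>lborel)"
    by (rule shift_nn) measurable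
  also have "\<dots> = 1" using surv_nn[OF dens, of i 0] surv0[OF dens, of i] i by simp
  finally show "(\<integral>\<^sup>+q. ennreal (phiP f i p q) \<partial>lborel) = 1" .
qed


lemma relev_eq: "n \<ge> 1 \<Longrightarrow> relevation_density f n z = mk (phiR f) n (z(0 := 0))"
proof -
  assume n: "n \<ge> 1"
  have ins: "{1..n} = insert 1 {2..n}" using n by auto
  have mk: "mk (phiR f) n (z(0 := 0)) = (if 0 < z 1 then f 1 (z 1) else 0) *
     (\<Prod>i\<in>{2..n}. if z (i - 1) < z i then f i (z i) / survival (f i) (z (i - 1)) else 0)"
    unfolding mk_def ins
    by (subst prod.insert) (auto simp: phiR_def intro!: prod.cong)
  show ?thesis
  proof (cases "0 < z 1 \<and> (\<forall>i\<in>{2..n}. z (i - 1) < z i)")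
    case True
    then show ?thesis unfolding mk relevation_density_def by (auto intro!: prod.cong)
  next
    case False
    then show ?thesis unfolding mk relevation_density_def
      by (auto intro!: prod_zero)
  qed
qed

lemma repl_eq: "n \<ge> 1 \<Longrightarrow> replacement_density f n z = mk (phiP f) n (z(0 := 0))"
proof -
  assume n: "n \<ge> 1"
  have ins: "{1..n} = insert 1 {2..n}" using n by auto
  have mk: "mk (phiP f) n (z(0 := 0)) = (if 0 < z 1 then f 1 (z 1) else 0) *
     (\<Prod>i\<in>{2..n}. if z (i - 1) < z i then f i (z i - z (i - 1)) else 0)"
    unfolding mk_def ins
    by (subst prod.insert) (auto simp: phiP_def intro!: prod.cong)
  show ?thesis
  proof (cases "0 < z 1 \<and> (\<forall>i\<in>{2..n}. z (i - 1) < z i)")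
    case True
    then show ?thesis unfolding mk replacement_density_def by (auto intro!: prod.cong)
  next
    case False
    then show ?thesis unfolding mk replacement_density_def
      by (auto intro!: prod_zero)
  qed
qed

lemma hz_R: assumes k: "k \<ge> 2" and a: "0 \<le> a" "a < t"
  shows "hz (phiR f) k a t = f k t / survival (f k) t"
proof -
  have sa: "survival (f k) a > 0" "survival (f k) t > 0" using surv_pos[of k] k a by auto
  have [measurable]: "f k \<in> borel_measurable borel" using fmeas k by simp
  have "(\<integral>\<^sup>+u. ennreal ((if t < u then 1 else 0) * phiR f k a u) \<partial>lborel) =
        (\<integral>\<^sup>+u. ennreal ((if t < u then 1 else 0) * f k u) * ennreal (1 / survival (f k) a) \<partial>lborel)"
    using k sa a by (intro nn_integral_cong) (auto simp: phiR_def ennreal_mult'[symmetric] fnn)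
  also have "\<dots> = ennreal (survival (f k) t) * ennreal (1 / survival (f k) a)"
    using surv_nn[OF dens[of k]] k by (subst nn_integral_multc) auto
  also have "\<dots> = ennreal (survival (f k) t / survival (f k) a)" using sa by (simp add: ennreal_mult'[symmetric])
  finally have "enn2real (\<integral>\<^sup>+u. ennreal ((if t < u then 1 else 0) * phiR f k a u) \<partial>lborel) = survival (f k) t / survival (f k) a"
    using sa by simp
  then show ?thesis unfolding hz_def using k a sa by (simp add: phiR_def)
qed

lemma hz_P: assumes k: "k \<ge> 2" and a: "a < t"
  shows "hz (phiP f) k a t = f k (t - a) / survival (f k) (t - a)"
proof -
  have [measurable]: "f k \<in> borel_measurable borel" using fmeas k by simp
  have "(\<integral>\<^sup>+u. ennreal ((if t < u then 1 else 0) * phiP f k a u) \<partial>lborel) =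
        (\<integral>\<^sup>+u. (\<lambda>v. ennreal ((if t - a < v then 1 else 0) * f k v)) (u - a) \<partial>lborel)"
    using k a by (intro nn_integral_cong) (auto simp: phiP_def)
  also have "\<dots> = (\<integral>\<^sup>+v. ennreal ((if t - a < v then 1 else 0) * f k v) \<partial>lborel)"
    by (rule shift_nn) measurable
  also have "\<dots> = ennreal (survival (f k) (t - a))" using surv_nn[OF dens[of k]] k by simp
  finally have "enn2real (\<integral>\<^sup>+u. ennreal ((if t < u then 1 else 0) * phiP f k a u) \<partial>lborel) = survival (f k) (t - a)"
    using surv_nonneg[OF dens[of k]] k by simp
  then show ?thesis unfolding hz_def using k a by (simp add: phiP_def)
qed

lemma one_eq: "phiR f 1 0 q = phiP f 1 0 q"
  by (simp add: phiR_def phiP_def)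

end

theorem theorem3p3:
  fixes f :: "nat \<Rightarrow> real \<Rightarrow> real"
  assumes dens: "\<And>n. n \<ge> 1 \<Longrightarrow> is_lifetime_density (f n)"
    and surv_pos: "\<And>n t. n \<ge> 1 \<Longrightarrow> t \<ge> 0 \<Longrightarrow> survival (f n) t > 0"
  shows "((\<forall>i\<ge>1. IFR (f i)) \<longrightarrow>
           (\<forall>n\<ge>1. dyn_hr_le n (relevation_density f n) (replacement_density f n)))
       \<and> ((\<forall>i\<ge>1. DFR (f i)) \<longrightarrow>
           (\<forall>n\<ge>1. dyn_hr_le n (replacement_density f n) (relevation_density f n)))"
proof (intro conjI impI allI)
  fix n :: nat
  assume ifr: "\<forall>i\<ge>1. IFR (f i)" and n: "n \<ge> 1"
  show "dyn_hr_le n (relevation_density f n) (replacement_density f n)"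
  proof (rule dyn_main[OF good_R[OF dens surv_pos] _ good_P[OF dens surv_pos]])
    show "relevation_density f n z = mk (phiR f) n (z(0 := 0))" for z using relev_eq[OF dens surv_pos n] .
    show "replacement_density f n z = mk (phiP f) n (z(0 := 0))" for z using repl_eq[OF dens surv_pos n] .
    show "phiR f 1 0 q = phiP f 1 0 q" for q by (simp add: phiR_def phiP_def)
    fix k :: nat and a b t :: real
    assume k: "k \<ge> 2" and ab: "0 < a" "a \<le> b" "b < t"
    have m: "mono_on {0..} (\<lambda>t. f k t / survival (f k) t)" using ifr k unfolding IFR_def by simp
    have "f k (t - b) / survival (f k) (t - b) \<le> f k t / survival (f k) t"
      using ab by (intro mono_onD[OF m]) auto
    then show "hz (phiP f) k b t \<le> hz (phiR f) k a t"
      using hz_P[OF dens surv_pos k ab(3)] hz_R[OF dens surv_pos k _ ] ab by simp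
  qed
next
  fix n :: nat
  assume dfr: "\<forall>i\<ge>1. DFR (f i)" and n: "n \<ge> 1"
  show "dyn_hr_le n (replacement_density f n) (relevation_density f n)"
  proof (rule dyn_main[OF good_P[OF dens surv_pos] _ good_R[OF dens surv_pos]])
    show "relevation_density f n z = mk (phiR f) n (z(0 := 0))" for z using relev_eq[OF dens surv_pos n] .
    show "replacement_density f n z = mk (phiP f) n (z(0 := 0))" for z using repl_eq[OF dens surv_pos n] .
    show "phiP f 1 0 q = phiR f 1 0 q" for q by (simp add: phiR_def phiP_def)
    fix k :: nat and a b t :: real
    assume k: "k \<ge> 2" and ab: "0 < a" "a \<le> b" "b < t"
    have m: "antimono_on {0..} (\<lambda>t. f k t / survival (f k) t)" using dfr k unfolding DFR_def by simp
    have "f k t / survival (f k) t \<le> f k (t - a) / survival (f k) (t - a)"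
      using ab by (intro monotone_onD[OF m]) auto
    then show "hz (phiR f) k b t \<le> hz (phiP f) k a t"
      using hz_P[OF dens surv_pos k] hz_R[OF dens surv_pos k] ab by simp
  qed
qed

end
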